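(* Let $P$ be a finite poset, $\epsilon\in\{1,-1\}$ and $\xi\in S^{(\epsilon)}$ such that $T^\xi$ is a generator of $\omega^{(\epsilon)}$ of degree $d>q^{(\epsilon)}\mathrm{dist}(-\infty,\infty)$. Define $\xi_1\in\mathbb Z^{P^-}$ by $\xi_1(z)=\xi(z)-1$ if $z=-\infty$ or if there exists $C\in C_\xi^{[d-\epsilon]}$ with $z=\max\{c\in C:\xi(c)>\epsilon\}$, and $\xi_1(z)=\xi(z)$ otherwise. Then $\xi_1\in S^{(\epsilon)}$ and $T^{\xi_1}$ is a generator of $\omega^{(\epsilon)}$ of degree $d-1$.
   Context: $P^\pm=P\cup\{-\infty,\infty\}$, $-\infty<z<\infty$ for $z\in P$; $P^-=P\cup\{-\infty\}$. Saturated chain: $x=z_0\lessdot\cdots\lessdot z_t=y$, length $t$; $q^{(\epsilon)}\mathrm{dist}(x,y)=\max\{\epsilon t:$ saturated chain of length $t$ from $x$ to $y$ in $P^\pm\}$. $\xi^+(B)=\sum_{b\in B}\xi(b)$. $S^{(m)}=\{\xi\in\mathbb Z^{P^-}:\xi(x)\ge m\ \forall x\in P,\ \xi(-\infty)\ge\xi^+(C)+m$ for every maximal chain $C$\}; $C_\xi^{[m]}$ = maximal chains $C$ of $P$ with $\xi^+(C)=m$. $R=\mathbb K[\mathcal C(P)]=\bigoplus_{S^{(0)}}\mathbb KT^\xi$ (Ehrhart ring of the chain polytope; $T^\xi=\prod_{x\in P^-}T_x^{\xi(x)}$, $\deg T^\xi=\xi(-\infty)$), $\omega^{(1)}=\omega=\bigoplus_{S^{(1)}}\mathbb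 KT^\xi$ canonical ideal, $\omega^{(-1)}=R:\omega=\bigoplus_{S^{(-1)}}\mathbb KT^\xi$. A generator of $\omega^{(\epsilon)}$ is a monomial $T^\xi$, $\xi\in S^{(\epsilon)}$, not of the form $T^{\xi_1}T^{\xi_2}$ with $\xi_1\in S^{(0)}$, $\xi_1(-\infty)>0$, $\xi_2\in S^{(\epsilon)}$. *)

theory Defs
  imports Main
begin

text \<open>The poset P is a finite subset of a type of class order, with the induced order.
  P^{+-} is modelled by the datatype ext: NegInf, Fin x (x in P), PosInf.
  Elements of Z^{P^-} are functions ext => int; only values at NegInf and Fin x, x in P, matter.\<close>

datatype 'a ext = NegInf | Fin 'a | PosInf

fun ext_le :: "'a::order ext \<Rightarrow> 'a ext \<Rightarrow> bool" where
  "ext_le NegInf _ = True"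
| "ext_le _ PosInf = True"
| "ext_le (Fin x) (Fin y) = (x \<le> y)"
| "ext_le _ _ = False"

definition ext_less :: "'a::order ext \<Rightarrow> 'a ext \<Rightarrow> bool" where
  "ext_less x y \<longleftrightarrow> ext_le x y \<and> x \<noteq> y"

definition ext_carrier :: "'a set \<Rightarrow> 'a ext set" where
  "ext_carrier P = {NegInf, PosInf} \<union> Fin ` P"

definition minus_carrier :: "'a set \<Rightarrow> 'a ext set" where
  "minus_carrier P = insert NegInf (Fin ` P)"

definition covers :: "'a::order set \<Rightarrow> 'a ext \<Rightarrow> 'a ext \<Rightarrow> bool" where
  "covers P x y \<longleftrightarrow> x \<in> ext_carrier P \<and> y \<in> ext_carrier P \<and> ext_less x y \<and>
     \<not> (\<exists>z \<in> ext_carrier P. ext_less x z \<and> ext_less z y)"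

definition sat_chain :: "'a::order set \<Rightarrow> 'a ext \<Rightarrow> 'a ext \<Rightarrow> 'a ext list \<Rightarrow> bool" where
  "sat_chain P x y zs \<longleftrightarrow> zs \<noteq> [] \<and> hd zs = x \<and> last zs = y \<and>
     (\<forall>i. Suc i < length zs \<longrightarrow> covers P (zs ! i) (zs ! Suc i))"

definition qdist :: "int \<Rightarrow> 'a::order set \<Rightarrow> 'a ext \<Rightarrow> 'a ext \<Rightarrow> int" where
  "qdist eps P x y = Max {eps * int (length zs - 1) | zs. sat_chain P x y zs}"

definition is_chain :: "'a::order set \<Rightarrow> 'a set \<Rightarrow> bool" where
  "is_chain P C \<longleftrightarrow> C \<subseteq> P \<and> (\<forall>x\<in>C. \<forall>y\<in>C. x \<le> y \<or> y \<le> x)"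

definition max_chain :: "'a::order set \<Rightarrow> 'a set \<Rightarrow> bool" where
  "max_chain P C \<longleftrightarrow> is_chain P C \<and> (\<forall>D. is_chain P D \<and> C \<subseteq> D \<longrightarrow> D = C)"

definition xi_plus :: "('a ext \<Rightarrow> int) \<Rightarrow> 'a set \<Rightarrow> int" where
  "xi_plus \<xi> B = (\<Sum>b\<in>B. \<xi> (Fin b))"

definition S_set :: "int \<Rightarrow> 'a::order set \<Rightarrow> ('a ext \<Rightarrow> int) set" where
  "S_set m P = {\<xi>. (\<forall>x\<in>P. \<xi> (Fin x) \<ge> m) \<and>
                     (\<forall>C. max_chain P C \<longrightarrow> \<xi> NegInf \<ge> xi_plus \<xi> C + m)}"

definition C_xi :: "'a::order set \<Rightarrow> ('a ext \<Rightarrow> int) \<Rightarrow> int \<Rightarrow> 'a set set" where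
  "C_xi P \<xi> m = {C. max_chain P C \<and> xi_plus \<xi> C = m}"

text \<open>T^xi is a generator of omega^{(eps)}; T^xi = T^xi1 T^xi2 means xi = xi1 + xi2 on P^-.\<close>
definition is_generator :: "int \<Rightarrow> 'a::order set \<Rightarrow> ('a ext \<Rightarrow> int) \<Rightarrow> bool" where
  "is_generator eps P \<xi> \<longleftrightarrow> \<xi> \<in> S_set eps P \<and>
     \<not> (\<exists>\<xi>1 \<xi>2. \<xi>1 \<in> S_set 0 P \<and> \<xi>1 NegInf > 0 \<and> \<xi>2 \<in> S_set eps P \<and>
          (\<forall>z \<in> minus_carrier P. \<xi> z = \<xi>1 z + \<xi>2 z))"

end

theory Submission imports Defs begin

lemma ext_le_refl[simp]: "ext_le x x"
  by (cases x) auto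

lemma ext_le_trans: "ext_le x y \<Longrightarrow> ext_le y z \<Longrightarrow> ext_le (x::'a::order ext) z"
  by (cases x; cases y; cases z) auto

lemma ext_le_antisym: "ext_le x y \<Longrightarrow> ext_le y x \<Longrightarrow> (x::'a::order ext) = y"
  by (cases x; cases y) auto

lemma ext_less_trans: "ext_less x y \<Longrightarrow> ext_less y z \<Longrightarrow> ext_less (x::'a::order ext) z"
  unfolding ext_less_def using ext_le_trans ext_le_antisym by blast

lemma transp_ext_less: "transp (ext_less :: 'a::order ext \<Rightarrow> _)"
  by (rule transpI) (rule ext_less_trans)

lemma chain_list:
  fixes C :: "'a::order set"
  assumes "finite C" "\<forall>x\<in>C. \<forall>y\<in>C. x \<le> y \<or> y \<le> x"
  shows "\<exists>xs. set xs = C \<and> sorted_wrt (<) xs \<and> distinct xs"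
  using assms
proof (induction "card C" arbitrary: C)
  case 0
  then show ?case by auto
next
  case (Suc n)
  then have ne: "C \<noteq> {}" by auto
  obtain m where m: "m \<in> C" "\<forall>b\<in>C. m \<le> b \<longrightarrow> m = b"
    using finite_has_maximal[OF Suc(3) ne] by blast
  have "n = card (C - {m})" using Suc(2) m(1) Suc(3) by auto
  then obtain xs where xs: "set xs = C - {m}" "sorted_wrt (<) xs" "distinct xs"
    using Suc by (metis Diff_iff finite_Diff)
  have "\<forall>x\<in>set xs. x < m"
    using xs(1) m Suc(4) by (metis Diff_iff insert_iff order.order_iff_strict)
  then show ?case using xs m(1)
    by (intro exI[of _ "xs @ [m]"]) (auto simp: sorted_wrt_append)
qed

lemma sat_chain_carrier:
  assumes "sat_chain P x PosInf zs" "i < length zs"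
  shows "zs ! i \<in> ext_carrier P"
proof (cases "Suc i < length zs")
  case True
  then show ?thesis using assms unfolding sat_chain_def covers_def by blast
next
  case False
  then have "i = length zs - 1" using assms(2) by auto
  then have "zs ! i = last zs" using assms unfolding sat_chain_def by (metis last_conv_nth)
  then show ?thesis using assms by (simp add: sat_chain_def ext_carrier_def)
qed

lemma sat_chain_sorted:
  assumes "sat_chain P x y zs"
  shows "sorted_wrt ext_less zs"
  using assms unfolding sat_chain_def covers_def
  by (subst sorted_wrt_iff_nth_Suc_transp[OF transp_ext_less]) blast

lemma sorted_distinct: "sorted_wrt ext_less zs \<Longrightarrow> distinct zs"
  by (induction zs) (auto simp: ext_less_def)

lemma finite_ext_carrier: "finite P \<Longrightarrow> finite (ext_carrier P)"
  by (simp add: ext_carrier_def)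

lemma sat_chain_len:
  assumes "finite P" "sat_chain P x PosInf zs"
  shows "length zs \<le> card (ext_carrier P)"
proof -
  have "set zs \<subseteq> ext_carrier P"
    using sat_chain_carrier[OF assms(2)] by (auto simp: in_set_conv_nth)
  moreover have "distinct zs" using sorted_distinct sat_chain_sorted assms(2) by blast
  ultimately show ?thesis
    by (metis assms(1) card_mono distinct_card finite_ext_carrier)
qed

lemma qdist_finite:
  assumes "finite P"
  shows "finite {eps * int (length zs - 1) | zs. sat_chain P x PosInf zs}"
proof -
  have "{eps * int (length zs - 1) | zs. sat_chain P x PosInf zs}
     \<subseteq> (\<lambda>n. eps * int n) ` {..card (ext_carrier P)}"
    using sat_chain_len[OF assms] by fastforce
  then show ?thesis by (rule finite_subset) auto
qed


lemma between_sorted: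
  assumes "sorted_wrt ext_less zs" "Suc i < length zs" "ext_less (zs!i) z" "ext_less z (zs!Suc i)"
    "j < length zs"
  shows "ext_less (zs!j) z \<or> ext_less z (zs!j)"
proof (cases "j \<le> i")
  case True
  then show ?thesis
  proof (cases "j = i")
    case False
    then have "ext_less (zs!j) (zs!i)" using True assms sorted_wrt_nth_less by fastforce
    then show ?thesis using assms(3) ext_less_trans by blast
  qed (use assms in auto)
next
  case False
  then show ?thesis
  proof (cases "j = Suc i")
    case False
    then have "ext_less (zs!Suc i) (zs!j)" using \<open>\<not> j \<le> i\<close> assms sorted_wrt_nth_less by fastforce
    then show ?thesis using assms(4) ext_less_trans by blast
  qed (use assms in auto)
qed

lemma maxchain_sat:
  fixes P :: "'a::order set"
  assumes "finite P" "max_chain P C"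
  shows "\<exists>zs. sat_chain P NegInf PosInf zs \<and> length zs = card C + 2"
proof -
  have CP: "C \<subseteq> P" and ch: "\<forall>x\<in>C. \<forall>y\<in>C. x \<le> y \<or> y \<le> x"
    using assms(2) by (auto simp: max_chain_def is_chain_def)
  have fC: "finite C" using CP assms(1) finite_subset by blast
  obtain xs where xs: "set xs = C" "sorted_wrt (<) xs" "distinct xs"
    using chain_list[OF fC ch] by blast
  define zs where "zs = NegInf # map Fin xs @ [PosInf]"
  have srt: "sorted_wrt ext_less zs"
    using xs(2) by (auto simp: zs_def sorted_wrt_append sorted_wrt_map ext_less_def
        intro: sorted_wrt_mono_rel[of _ "(<)"])
  have car: "set zs \<subseteq> ext_carrier P" using xs(1) CP by (auto simp: zs_def ext_carrier_def)
  have len: "length zs = card C + 2" using xs distinct_card[of xs] by (simp add: zs_def)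
  have cov: "covers P (zs ! i) (zs ! Suc i)" if i: "Suc i < length zs" for i
  proof -
    have "ext_less (zs ! i) (zs ! Suc i)" using srt i sorted_wrt_nth_less by blast
    moreover have "zs ! i \<in> ext_carrier P" "zs ! Suc i \<in> ext_carrier P"
      using car i by auto
    moreover have "\<not> (ext_less (zs!i) z \<and> ext_less z (zs!Suc i))" if z: "z \<in> ext_carrier P" for z
    proof
      assume b: "ext_less (zs!i) z \<and> ext_less z (zs!Suc i)"
      have "z \<noteq> NegInf" using b by (cases "zs!i") (auto simp: ext_less_def)
      moreover have "z \<noteq> PosInf" using b by (cases "zs!Suc i") (auto simp: ext_less_def)
      ultimately obtain p where p: "z = Fin p" "p \<in> P" using z by (auto simp: ext_carrier_def)
      have cmp: "ext_less (Fin c) z \<or> ext_less z (Fin c)" if "c \<in> C" for c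
      proof -
        have "Fin c \<in> set zs" using that xs(1) by (simp add: zs_def)
        then obtain j where "j < length zs" "zs ! j = Fin c" by (auto simp: in_set_conv_nth)
        then show ?thesis using between_sorted[OF srt i] b by metis
      qed
      have "is_chain P (insert p C)"
        using cmp ch CP p by (auto simp: is_chain_def ext_less_def)
      then have "insert p C = C" using assms(2) by (auto simp: max_chain_def)
      then have "p \<in> C" by blast
      then show False using cmp p by (auto simp: ext_less_def)
    qed
    ultimately show ?thesis unfolding covers_def by blast
  qed
  have "sat_chain P NegInf PosInf zs"
    unfolding sat_chain_def using cov by (simp add: zs_def)
  then show ?thesis using len by blast
qed

lemma maxchain_qdist:
  fixes P :: "'a::order set"
  assumes "finite P" "max_chain P C"
  shows "eps * (int (card C) + 1) \<le> qdist eps P NegInf PosInf"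
proof -
  obtain zs where zs: "sat_chain P NegInf PosInf zs" "length zs = card C + 2"
    using maxchain_sat[OF assms] by blast
  have "eps * int (length zs - 1) \<in> {eps * int (length zs - 1) | zs. sat_chain P NegInf PosInf zs}"
    using zs by blast
  then have "eps * int (length zs - 1) \<le> qdist eps P NegInf PosInf"
    unfolding qdist_def using qdist_finite[OF assms(1)] by (rule Max_ge[rotated])
  then show ?thesis using zs(2) by (simp add: add.commute)
qed


lemma splice_max_chain:
  fixes P :: "'a::order set"
  assumes "max_chain P C" "max_chain P D" "w \<in> C" "w \<in> D"
  shows "max_chain P ({x\<in>C. x \<le> w} \<union> {x\<in>D. \<not> x \<le> w})"
proof -
  have C: "C \<subseteq> P" "\<forall>x\<in>C. \<forall>y\<in>C. x \<le> y \<or> y \<le> x"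
    and D: "D \<subseteq> P" "\<forall>x\<in>D. \<forall>y\<in>D. x \<le> y \<or> y \<le> x"
    using assms(1,2) by (auto simp: max_chain_def is_chain_def)
  let ?F = "{x\<in>C. x \<le> w} \<union> {x\<in>D. \<not> x \<le> w}"
  have chF: "is_chain P ?F"
    unfolding is_chain_def
  proof (intro conjI ballI)
    show "?F \<subseteq> P" using C D by auto
  next
    fix x y assume "x \<in> ?F" "y \<in> ?F"
    moreover have "w \<le> z" if "z \<in> D" "\<not> z \<le> w" for z using D(2) assms(4) that by blast
    ultimately show "x \<le> y \<or> y \<le> x" using C(2) D(2) by (auto intro: order_trans)
  qed
  have "E = ?F" if E: "is_chain P E" "?F \<subseteq> E" for E
  proof
    show "E \<subseteq> ?F"
    proof
      fix y assume y: "y \<in> E"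
      have wE: "w \<in> E" using E(2) assms(3) by auto
      have Ecmp: "\<forall>x\<in>E. \<forall>z\<in>E. x \<le> z \<or> z \<le> x" "E \<subseteq> P" using E(1) by (auto simp: is_chain_def)
      show "y \<in> ?F"
      proof (cases "y \<le> w")
        case True
        have "y \<le> c \<or> c \<le> y" if c: "c \<in> C" for c
        proof (cases "c \<le> w")
          case True then show ?thesis using c Ecmp y E(2) by blast
        next
          case False then have "w \<le> c" using C(2) c assms(3) by blast
          then show ?thesis using \<open>y \<le> w\<close> by (auto intro: order_trans)
        qed
        then have "is_chain P (insert y C)"
          unfolding is_chain_def using C Ecmp y by auto
        then have "y \<in> C" using assms(1) unfolding max_chain_def by blast
        then show ?thesis using True by auto
      next
        case False
        then have wy: "w \<le> y" using Ecmp wE y by blast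
        have "y \<le> c \<or> c \<le> y" if c: "c \<in> D" for c
        proof (cases "c \<le> w")
          case False then show ?thesis using c Ecmp y E(2) by blast
        next
          case True then show ?thesis using wy by (auto intro: order_trans)
        qed
        then have "is_chain P (insert y D)"
          unfolding is_chain_def using D Ecmp y by auto
        then have "y \<in> D" using assms(2) unfolding max_chain_def by blast
        then show ?thesis using False by auto
      qed
    qed
  qed (use E in auto)
  then show ?thesis using chF unfolding max_chain_def by blast
qed

lemma xi_plus_union:
  "finite A \<Longrightarrow> finite B \<Longrightarrow> A \<inter> B = {} \<Longrightarrow> xi_plus f (A \<union> B) = xi_plus f A + xi_plus f B"
  unfolding xi_plus_def by (rule sum.union_disjoint)

lemma xi_plus_split:
  assumes "finite X"
  shows "xi_plus f X = xi_plus f {x\<in>X. x \<le> w} + xi_plus f {x\<in>X. \<not> x \<le> w}"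
proof -
  have "X = {x\<in>X. x \<le> w} \<union> {x\<in>X. \<not> x \<le> w}" by auto
  then show ?thesis using xi_plus_union[of "{x\<in>X. x \<le> w}" "{x\<in>X. \<not> x \<le> w}" f] assms by auto
qed


theorem mainTheorem15:
  fixes P :: "'a::order set" and eps :: int and \<xi> :: "'a ext \<Rightarrow> int" and d :: int
  assumes "finite P"
    and "eps = 1 \<or> eps = -1"
    and "is_generator eps P \<xi>"
    and "\<xi> NegInf = d"
    and "d > qdist eps P NegInf PosInf"
  defines "\<xi>1 \<equiv> (\<lambda>z. if z = NegInf \<or>
              (\<exists>C \<in> C_xi P \<xi> (d - eps). \<exists>c \<in> C. z = Fin c \<and> \<xi> (Fin c) > eps \<and>
                  (\<forall>c' \<in> C. \<xi> (Fin c') > eps \<longrightarrow> c' \<le> c))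
            then \<xi> z - 1 else \<xi> z)"
  shows "\<xi>1 \<in> S_set eps P \<and> is_generator eps P \<xi>1 \<and> \<xi>1 NegInf = d - 1"
proof -
  define dec where "dec c \<longleftrightarrow> (\<exists>C \<in> C_xi P \<xi> (d - eps). c \<in> C \<and> \<xi> (Fin c) > eps \<and>
                  (\<forall>c' \<in> C. \<xi> (Fin c') > eps \<longrightarrow> c' \<le> c))" for c
  have x1N: "\<xi>1 NegInf = d - 1" using assms(4) by (simp add: \<xi>1_def)
  have x1F: "\<xi>1 (Fin c) = (if dec c then \<xi> (Fin c) - 1 else \<xi> (Fin c))" for c
    unfolding \<xi>1_def dec_def by auto
  have decgt: "dec c \<Longrightarrow> \<xi> (Fin c) > eps" for c unfolding dec_def by blast
  have x1le: "\<xi>1 (Fin c) \<le> \<xi> (Fin c)" for c using x1F by simp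
  have xiS: "\<xi> \<in> S_set eps P" using assms(3) by (simp add: is_generator_def)
  have xpos: "\<And>x. x \<in> P \<Longrightarrow> \<xi> (Fin x) \<ge> eps"
    and xch: "\<And>C. max_chain P C \<Longrightarrow> d \<ge> xi_plus \<xi> C + eps"
    using xiS assms(4) by (auto simp: S_set_def)
  have mc: "C \<subseteq> P" "finite C" "\<forall>x\<in>C. \<forall>y\<in>C. x \<le> y \<or> y \<le> x" if "max_chain P C" for C
    using that assms(1) finite_subset by (auto simp: max_chain_def is_chain_def)
  have x1le_sum: "xi_plus \<xi>1 X \<le> xi_plus \<xi> X" for X
    unfolding xi_plus_def by (rule sum_mono) (rule x1le)
  have S1: "\<xi>1 \<in> S_set eps P"
  proof -
    have "\<xi>1 (Fin x) \<ge> eps" if "x \<in> P" for x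
      using x1F[of x] decgt[of x] xpos[OF that] by auto
    moreover have "\<xi>1 NegInf \<ge> xi_plus \<xi>1 C + eps" if C: "max_chain P C" for C
    proof (cases "xi_plus \<xi> C \<le> d - eps - 1")
      case True
      then show ?thesis using x1le_sum[of C] x1N by linarith
    next
      case False
      then have tight: "xi_plus \<xi> C = d - eps" using xch[OF C] by linarith
      let ?M = "{c\<in>C. \<xi> (Fin c) > eps}"
      show ?thesis
      proof (cases "?M = {}")
        case True
        then have "\<forall>c\<in>C. \<xi> (Fin c) = eps" using xpos mc[OF C] by force
        then have "xi_plus \<xi> C = eps * int (card C)" by (simp add: xi_plus_def)
        then have "d = eps * (int (card C) + 1)" using tight by (simp add: algebra_simps)
        then show ?thesis using maxchain_qdist[OF assms(1) C, of eps] assms(5) by linarith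
      next
        case False
        obtain m where m: "m \<in> ?M" "\<forall>b\<in>?M. m \<le> b \<longrightarrow> m = b"
          using finite_has_maximal[OF _ False] mc[OF C] by auto
        have "\<forall>c'\<in>C. \<xi> (Fin c') > eps \<longrightarrow> c' \<le> m"
          using m mc(3)[OF C] by blast
        then have "dec m" unfolding dec_def C_xi_def using m(1) C tight by blast
        have "xi_plus \<xi>1 C = \<xi>1 (Fin m) + xi_plus \<xi>1 (C - {m})"
          unfolding xi_plus_def using m(1) mc(2)[OF C] by (intro sum.remove) auto
        also have "\<dots> \<le> \<xi> (Fin m) - 1 + xi_plus \<xi> (C - {m})"
          using x1F[of m] \<open>dec m\<close> x1le_sum[of "C - {m}"] by simp
        also have "\<dots> = xi_plus \<xi> C - 1"
          unfolding xi_plus_def using m(1) mc(2)[OF C] using sum.remove[of C m "\<lambda>b. \<xi> (Fin b)"] by auto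
        finally show ?thesis using tight x1N by linarith
      qed
    qed
    ultimately show ?thesis by (simp add: S_set_def)
  qed
  have gen: "is_generator eps P \<xi>1"
    unfolding is_generator_def
  proof (intro conjI S1 notI)
    assume "\<exists>\<alpha> \<beta>. \<alpha> \<in> S_set 0 P \<and> \<alpha> NegInf > 0 \<and> \<beta> \<in> S_set eps P \<and>
          (\<forall>z \<in> minus_carrier P. \<xi>1 z = \<alpha> z + \<beta> z)"
    then obtain \<alpha> \<beta> where ab: "\<alpha> \<in> S_set 0 P" "\<alpha> NegInf > 0" "\<beta> \<in> S_set eps P"
      "\<forall>z \<in> minus_carrier P. \<xi>1 z = \<alpha> z + \<beta> z" by blast
    define k where "k = \<alpha> NegInf"
    have bN: "\<beta> NegInf = d - 1 - k" using ab(4) x1N by (auto simp: k_def minus_carrier_def)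
    have x1ab: "\<xi>1 (Fin x) = \<alpha> (Fin x) + \<beta> (Fin x)" if "x \<in> P" for x
      using ab(4) that by (auto simp: minus_carrier_def)
    have apos: "\<And>x. x \<in> P \<Longrightarrow> \<alpha> (Fin x) \<ge> 0"
      and bpos: "\<And>x. x \<in> P \<Longrightarrow> \<beta> (Fin x) \<ge> eps"
      and bch: "\<And>C. max_chain P C \<Longrightarrow> d - 1 - k \<ge> xi_plus \<beta> C + eps"
      using ab(1,3) bN by (auto simp: S_set_def)
    have bsum: "xi_plus \<beta> X = xi_plus \<xi>1 X - xi_plus \<alpha> X" if "X \<subseteq> P" for X
      unfolding xi_plus_def using x1ab that
      by (simp add: sum_subtractf[symmetric] subset_iff)
    define \<beta>' where "\<beta>' z = \<xi> z - \<alpha> z" for z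
    have "\<beta>' \<in> S_set eps P"
    proof -
      have "\<beta>' (Fin x) \<ge> eps" if "x \<in> P" for x
        using x1le[of x] x1ab[OF that] bpos[OF that] by (simp add: \<beta>'_def)
      moreover have "\<beta>' NegInf \<ge> xi_plus \<beta>' C + eps" if C: "max_chain P C" for C
      proof -
        have b'C: "xi_plus \<beta>' C = xi_plus \<xi> C - xi_plus \<alpha> C"
          unfolding xi_plus_def \<beta>'_def by (simp add: sum_subtractf)
        have b'N: "\<beta>' NegInf = d - k" using assms(4) by (simp add: \<beta>'_def k_def)
        have goal: "d - k \<ge> xi_plus \<xi> C - xi_plus \<alpha> C + eps"
        proof (cases "{c\<in>C. dec c} = {}")
          case True
          have "xi_plus \<xi>1 C = xi_plus \<xi> C"
            unfolding xi_plus_def using True x1F by (intro sum.cong) auto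
          then show ?thesis using bch[OF C] bsum[OF mc(1)[OF C]] by linarith
        next
          case False
          obtain w where w: "w \<in> {c\<in>C. dec c}" "\<forall>b\<in>{c\<in>C. dec c}. b \<le> w \<longrightarrow> w = b"
            using finite_has_minimal[OF _ False] mc[OF C] by auto
          have wmin: "\<And>c. c \<in> C \<Longrightarrow> dec c \<Longrightarrow> w \<le> c" using w mc(3)[OF C] by blast
          obtain D where D: "max_chain P D" "xi_plus \<xi> D = d - eps" "w \<in> D" "\<xi> (Fin w) > eps"
            "\<forall>c'\<in>D. \<xi> (Fin c') > eps \<longrightarrow> c' \<le> w"
            using w(1) unfolding dec_def C_xi_def by blast
          define C1 where "C1 = {x\<in>C. x \<le> w}"
          define C2 where "C2 = {x\<in>C. \<not> x \<le> w}"
          define D1 where "D1 = {x\<in>D. x \<le> w}"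
          define D2 where "D2 = {x\<in>D. \<not> x \<le> w}"
          have wC: "w \<in> C" using w by auto
          have F: "max_chain P (C1 \<union> D2)" unfolding C1_def D2_def
            using splice_max_chain[OF C D(1) wC D(3)] .
          have G: "max_chain P (D1 \<union> C2)" unfolding D1_def C2_def
            using splice_max_chain[OF D(1) C D(3) wC] .
          have fin: "finite C1" "finite C2" "finite D1" "finite D2"
            using mc(2)[OF C] mc(2)[OF D(1)] by (auto simp: C1_def C2_def D1_def D2_def)
          have FP: "C1 \<union> D2 \<subseteq> P" using mc(1)[OF F] .
          have splF: "xi_plus f (C1 \<union> D2) = xi_plus f C1 + xi_plus f D2" for f
            using fin by (intro xi_plus_union) (auto simp: C1_def D2_def)
          have splG: "xi_plus f (D1 \<union> C2) = xi_plus f D1 + xi_plus f C2" for f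
            using fin by (intro xi_plus_union) (auto simp: D1_def C2_def)
          have splC: "xi_plus f C = xi_plus f C1 + xi_plus f C2" for f
            unfolding C1_def C2_def using xi_plus_split mc(2)[OF C] by blast
          have splD: "xi_plus f D = xi_plus f D1 + xi_plus f D2" for f
            unfolding D1_def D2_def using xi_plus_split mc(2)[OF D(1)] by blast
          have D2small: "\<xi> (Fin x) \<le> eps" if "x \<in> D2" for x
            using that D(5) by (force simp: D2_def)
          have x1F': "\<xi>1 (Fin x) = \<xi> (Fin x) - (if x = w then 1 else 0)" if "x \<in> C1 \<union> D2" for x
          proof (cases "x = w")
            case True then show ?thesis using x1F w by auto
          next
            case False
            have "\<not> dec x"
            proof
              assume dx: "dec x"
              show False
              proof (cases "x \<in> C1")
                case True then show False using wmin[of x] dx False by (auto simp: C1_def)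
              next
                case False2: False
                then have "x \<in> D2" using that by auto
                then show False using D2small decgt[OF dx] by force
              qed
            qed
            then show ?thesis using x1F False by simp
          qed
          have "xi_plus \<xi>1 (C1 \<union> D2) = xi_plus \<xi> (C1 \<union> D2) - 1"
          proof -
            have "xi_plus \<xi>1 (C1 \<union> D2) = (\<Sum>x\<in>C1 \<union> D2. \<xi> (Fin x) - (if x = w then 1 else 0))"
              unfolding xi_plus_def using x1F' by (intro sum.cong) auto
            also have "\<dots> = xi_plus \<xi> (C1 \<union> D2) - 1"
              unfolding xi_plus_def using fin wC
              by (simp add: sum_subtractf C1_def)
            finally show ?thesis .
          qed
          moreover have "xi_plus \<alpha> D2 \<le> 0"
            unfolding xi_plus_def
          proof (rule sum_nonpos)
            fix x assume x: "x \<in> D2"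
            then have "x \<in> P" using FP by auto
            then show "\<alpha> (Fin x) \<le> 0"
              using x1ab[of x] x1le[of x] bpos[of x] D2small[OF x] by linarith
          qed
          moreover have "xi_plus \<alpha> C2 \<ge> 0"
            unfolding xi_plus_def using mc(1)[OF C] apos by (intro sum_nonneg) (auto simp: C2_def)
          moreover have "d - 1 - k \<ge> xi_plus \<beta> (C1 \<union> D2) + eps" using bch[OF F] .
          moreover have "d \<ge> xi_plus \<xi> (D1 \<union> C2) + eps" using xch[OF G] .
          ultimately show ?thesis
            using bsum[OF FP] splF[of \<xi>] splF[of \<alpha>] splG[of \<xi>] splC[of \<xi>] splC[of \<alpha>]
              splD[of \<xi>] D(2) by linarith
        qed
        show ?thesis using goal b'C b'N by linarith
      qed
      ultimately show ?thesis by (simp add: S_set_def)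
    qed
    moreover have "\<forall>z \<in> minus_carrier P. \<xi> z = \<alpha> z + \<beta>' z" by (simp add: \<beta>'_def)
    ultimately show False using assms(3) ab(1,2) unfolding is_generator_def by blast
  qed
  show ?thesis using S1 gen x1N by blast
qed

end
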